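(* Let $(\Omega,\mathcal E_\Omega,\mathbb P)$ be a probability space, $X_{1:\infty}=(X_t)_{t\ge1}$ a measurable map into $(\underline{\mathbf S}_\infty,\underline{\mathcal S}_\infty)$ with $X_{1:T}$ its first $T$ components, $\Theta$ a Borel subset of $\mathbf R^p$ with Borel $\sigma$-algebra $\mathcal E_\Theta$, and $\theta_0\in\Theta$. For each $T$ let $\widehat{\mathbb P\circ{\theta^\bullet_T}^{-1}}$ be a data-dependent approximation which, for $T$ large enough, is a random probability measure from $\underline{\mathbf S}_\infty$ to $\Theta$: for all $B\in\mathcal E_\Theta$, $x_{1:\infty}\mapsto\widehat{\mathbb P\circ{\theta^\bullet_T}^{-1}}(B)$ is $\underline{\mathcal S}_\infty$-measurable, and it is a probability measure $\mathbb P$-a.s.; let $\hat F_{\theta^\bullet_T}(\theta):=\widehat{\mathbb P\circ{\theta^\bullet_T}^{-1}}(]-\infty,\theta])$ be its c.d.f. Let $\tilde\Sigma_T$ be $\sigma(X_{1:\infty})$-measurable $p\times p$ matrices, symmetric with probability tending to one, with $\tilde\Sigma_T\to\tilde\Sigma$ in probability for a positive-definite $\tilde\Sigma$, and let $\tilde\Sigma_T^{1/2}$ denote the Cholesky factor. Suppose, as $T\to\infty$: (a) $\tilde\theta_T\to\theta_0$ in probability, where $\tilde\theta_T$ is $\sigma(X_{1:\infty})/\mathcal E_\Theta$-measurable; and (b) for all $b\in\mathbf R^p$, $\hat F_{\theta^\bullet_T}(\tilde\theta_T+\tilde\Sigma_T^{1/2}b/\sqrt T)\to\mathfrak N(b;0;\grave\Sigma^{1/2})$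 in probability. Then $\rho_P(\hat F_{\theta^\bullet_T},\delta_{\theta_0})\to0$ in probability as $T\to\infty$.
   Context: $]-\infty,\theta]:=\prod_{j=1}^p]-\infty,\theta_j]$. $\mathfrak N(\cdot;0;\grave\Sigma^{1/2})$ is the c.d.f. of the centred Gaussian with covariance $\grave\Sigma$, a fixed $p\times p$ covariance matrix. $\rho_P$ is the Prokhorov metric on probability measures on $\Theta$, with a c.d.f. identified with its probability measure; $\delta_{\theta_0}$ is the Dirac mass at $\theta_0$. *)

theory Defs
  imports "HOL-Probability.Probability"
begin

definition vanishing_in_prob :: "'w measure \<Rightarrow> (nat \<Rightarrow> 'w \<Rightarrow> bool) \<Rightarrow> bool" where
  "vanishing_in_prob M E \<longleftrightarrow>
     (\<forall>\<delta>>0. eventually (\<lambda>T. \<exists>A\<in>sets M. {\<omega>\<in>space M. E T \<omega>} \<subseteq> A \<and> measure M A < \<delta>) sequentially)"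

definition conv_in_prob :: "'w measure \<Rightarrow> (nat \<Rightarrow> 'w \<Rightarrow> 'b::metric_space) \<Rightarrow> 'b \<Rightarrow> bool" where
  "conv_in_prob M Y c \<longleftrightarrow> (\<forall>\<epsilon>>0. vanishing_in_prob M (\<lambda>T \<omega>. dist (Y T \<omega>) c > \<epsilon>))"

definition prob_on :: "'a::topological_space set \<Rightarrow> ('a set \<Rightarrow> real) \<Rightarrow> bool" where
  "prob_on \<Theta> q \<longleftrightarrow> (\<exists>\<mu>. prob_space \<mu> \<and> sets \<mu> = sets (restrict_space borel \<Theta>) \<and>
                         (\<forall>B\<in>sets \<mu>. measure \<mu> B = q B))"

definition cdf_of :: "(real^'p) set \<Rightarrow> ((real^'p) set \<Rightarrow> real) \<Rightarrow> real^'p \<Rightarrow> real" where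
  "cdf_of \<Theta> q \<theta> = q {y\<in>\<Theta>. \<forall>j. y$j \<le> \<theta>$j}"

definition enlarge :: "'a::metric_space set \<Rightarrow> 'a set \<Rightarrow> real \<Rightarrow> 'a set" where
  "enlarge \<Theta> A \<epsilon> = {y\<in>\<Theta>. \<exists>a\<in>A. dist a y < \<epsilon>}"

definition prokhorov :: "'a::metric_space set \<Rightarrow> ('a set \<Rightarrow> real) \<Rightarrow> ('a set \<Rightarrow> real) \<Rightarrow> real" where
  "prokhorov \<Theta> q r = Inf {\<epsilon>. \<epsilon> > 0 \<and> (\<forall>A\<in>sets (restrict_space borel \<Theta>).
        q A \<le> r (enlarge \<Theta> A \<epsilon>) + \<epsilon> \<and> r A \<le> q (enlarge \<Theta> A \<epsilon>) + \<epsilon>)}"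

definition lower_triangular :: "real^('p::{finite,wellorder})^('p::{finite,wellorder}) \<Rightarrow> bool" where
  "lower_triangular L \<longleftrightarrow> (\<forall>i j. i < j \<longrightarrow> L$i$j = 0)"

definition chol :: "real^('p::{finite,wellorder})^('p::{finite,wellorder}) \<Rightarrow> real^('p::{finite,wellorder})^('p::{finite,wellorder})" where
  "chol A = (THE L. lower_triangular L \<and> (\<forall>i. L$i$i > 0) \<and> L ** transpose L = A)"

definition pos_def :: "real^'p^'p \<Rightarrow> bool" where
  "pos_def A \<longleftrightarrow> transpose A = A \<and> (\<forall>v. v \<noteq> 0 \<longrightarrow> v \<bullet> (A *v v) > 0)"

definition pos_semidef :: "real^'p^'p \<Rightarrow> bool" where
  "pos_semidef A \<longleftrightarrow> transpose A = A \<and> (\<forall>v. v \<bullet> (A *v v) \<ge> 0)"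

definition std_gauss :: "(real^'p) measure" where
  "std_gauss = density lborel (\<lambda>z. ennreal (\<Prod>i\<in>UNIV. std_normal_density (z$i)))"

definition gauss_cdf :: "real^'p^'p \<Rightarrow> real^'p \<Rightarrow> real" where
  "gauss_cdf S b = measure (distr std_gauss borel (\<lambda>z. (SOME A::real^'p^'p. A ** transpose A = S) *v z))
                           {y. \<forall>j. y$j \<le> b$j}"

end

theory Submission
  imports Defs
begin


definition ipA :: "real^'n^'n \<Rightarrow> real^'n \<Rightarrow> real^'n \<Rightarrow> real" where
  "ipA A x y = x \<bullet> (A *v y)"

lemma ipA_sym:
  fixes A :: "real^'n^'n"
  assumes "transpose A = A" shows "ipA A x y = ipA A y x"
proof -
  have "ipA A x y = (x v* A) \<bullet> y" by (simp add: ipA_def dot_lmul_matrix)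
  also have "x v* A = transpose A *v x" by simp
  also have "\<dots> = A *v x" using assms by simp
  finally show ?thesis by (simp add: ipA_def inner_commute)
qed

lemma ipA_add_left: "ipA A (x + y) z = ipA A x z + ipA A y z"
  by (simp add: ipA_def inner_add_left)
lemma ipA_scale_left: "ipA A (c *\<^sub>R x) z = c * ipA A x z"
  by (simp add: ipA_def)
lemma ipA_diff_left: "ipA A (x - y) z = ipA A x z - ipA A y z"
  by (simp add: ipA_def inner_diff_left)
lemma ipA_sum_left: "ipA A (\<Sum>k\<in>S. f k) z = (\<Sum>k\<in>S. ipA A (f k) z)"
  by (simp add: ipA_def inner_sum_left)
lemma ipA_add_right: "ipA A z (x + y) = ipA A z x + ipA A z y"
  by (simp add: ipA_def matrix_vector_right_distrib inner_add_right)
lemma ipA_scale_right: "ipA A z (c *\<^sub>R x) = c * ipA A z x"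
  by (simp add: ipA_def matrix_vector_mult_scaleR)
lemma ipA_diff_right: "ipA A z (x - y) = ipA A z x - ipA A z y"
  by (simp add: ipA_def matrix_vector_mult_diff_distrib inner_diff_right)
lemma ipA_sum_right: "ipA A z (\<Sum>k\<in>S. f k) = (\<Sum>k\<in>S. ipA A z (f k))"
proof (induction S rule: infinite_finite_induct)
  case (infinite A) then show ?case by (simp add: ipA_def)
next
  case empty then show ?case by (simp add: ipA_def)
next
  case (insert x F) then show ?case by (simp add: ipA_add_right)
qed

definition gsF :: "real^('n::{finite,wellorder})^('n::{finite,wellorder}) \<Rightarrow> (('n::{finite,wellorder}) \<Rightarrow> real^('n::{finite,wellorder})) \<Rightarrow> ('n::{finite,wellorder}) \<Rightarrow> real^('n::{finite,wellorder})" where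
  "gsF A f j = (let w = axis j 1 - (\<Sum>k\<in>{k. k<j}. ipA A (axis j 1) (f k) *\<^sub>R f k)
                in (1 / sqrt (ipA A w w)) *\<^sub>R w)"

definition gs :: "real^('n::{finite,wellorder})^('n::{finite,wellorder}) \<Rightarrow> ('n::{finite,wellorder}) \<Rightarrow> real^('n::{finite,wellorder})" where
  "gs A = wfrec {(x,y). x<y} (gsF A)"

definition gsw :: "real^('n::{finite,wellorder})^('n::{finite,wellorder}) \<Rightarrow> ('n::{finite,wellorder}) \<Rightarrow> real^('n::{finite,wellorder})" where
  "gsw A j = axis j 1 - (\<Sum>k\<in>{k. k<j}. ipA A (axis j 1) (gs A k) *\<^sub>R gs A k)"

lemma gs_eq: "gs A j = (1 / sqrt (ipA A (gsw A j) (gsw A j))) *\<^sub>R gsw A j"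
proof -
  have "gs A j = gsF A (cut (gs A) {(x,y). x<y} j) j"
    unfolding gs_def by (rule wfrec[OF wellorder_class.wf])
  also have "\<dots> = gsF A (gs A) j"
  proof -
    have "(\<Sum>k\<in>{k. k<j}. ipA A (axis j 1) (cut (gs A) {(x,y). x<y} j k) *\<^sub>R cut (gs A) {(x,y). x<y} j k)
        = (\<Sum>k\<in>{k. k<j}. ipA A (axis j 1) (gs A k) *\<^sub>R gs A k)"
      by (rule sum.cong) (auto simp: cut_apply)
    then show ?thesis unfolding gsF_def by simp
  qed
  finally show ?thesis by (simp add: gsF_def gsw_def Let_def)
qed


lemma gs_support: "j < i \<Longrightarrow> gs A j $ i = 0"
proof (induction j arbitrary: i rule: less_induct)
  case (less j)
  have "gsw A j $ i = 0"
  proof -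
    have "(\<Sum>k\<in>{k. k<j}. ipA A (axis j 1) (gs A k) * gs A k $ i) = 0"
      by (rule sum.neutral) (use less in auto)
    moreover have "axis j 1 $ i = (0::real)" using less.prems by (simp add: axis_def)
    ultimately show ?thesis by (simp add: gsw_def sum_component)
  qed
  then show ?case by (simp add: gs_eq[of A j])
qed

lemma gsw_diag: "gsw A j $ j = 1"
proof -
  have "(\<Sum>k\<in>{k. k<j}. ipA A (axis j 1) (gs A k) * gs A k $ j) = 0"
    by (rule sum.neutral) (auto simp: gs_support)
  then show ?thesis by (simp add: gsw_def sum_component axis_def)
qed

lemma gsw_nz: "gsw A j \<noteq> 0"
  using gsw_diag[of A j] by auto

definition "pdA A \<longleftrightarrow> transpose A = A \<and> (\<forall>v. v \<noteq> 0 \<longrightarrow> ipA A v v > 0)"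

lemma gsw_pos: "pdA A \<Longrightarrow> ipA A (gsw A j) (gsw A j) > 0"
  using gsw_nz[of A j] by (auto simp: pdA_def)

lemma gs_norm: "pdA A \<Longrightarrow> ipA A (gs A j) (gs A j) = 1"
proof -
  assume a: "pdA A"
  define w where "w = gsw A j"
  have p: "ipA A w w > 0" using gsw_pos[OF a] by (simp add: w_def)
  have "ipA A (gs A j) (gs A j) = (1 / sqrt (ipA A w w))^2 * ipA A w w"
    by (simp add: gs_eq[of A j] w_def[symmetric] ipA_scale_left ipA_scale_right power2_eq_square)
  also have "\<dots> = 1" using p by (simp add: power_divide)
  finally show ?thesis .
qed

lemma gs_expand:
  assumes "pdA A"
  shows "axis j 1 = sqrt (ipA A (gsw A j) (gsw A j)) *\<^sub>R gs A j
          + (\<Sum>k\<in>{k. k<j}. ipA A (axis j 1) (gs A k) *\<^sub>R gs A k)"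
proof -
  have p: "sqrt (ipA A (gsw A j) (gsw A j)) > 0" using gsw_pos[OF assms] by simp
  have "sqrt (ipA A (gsw A j) (gsw A j)) *\<^sub>R gs A j = gsw A j"
    using p by (simp add: gs_eq[of A j])
  then show ?thesis by (simp add: gsw_def)
qed

lemma gs_orth:
  assumes "pdA A"
  shows "i < j \<Longrightarrow> ipA A (gs A i) (gs A j) = 0"
proof (induction j arbitrary: i rule: less_induct)
  case (less j)
  have sym: "\<And>x y. ipA A x y = ipA A y x" using assms ipA_sym by (auto simp: pdA_def)
  have d: "\<And>k. k < j \<Longrightarrow> ipA A (gs A i) (gs A k) = (if k = i then 1 else 0)"
  proof -
    fix k assume k: "k < j"
    show "ipA A (gs A i) (gs A k) = (if k = i then 1 else 0)"
    proof (cases "k < i")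
      case True then show ?thesis using less.IH[of i k] less.prems sym by auto
    next
      case False
      then have "k = i \<or> i < k" by auto
      then show ?thesis using less.IH[of k i] k gs_norm[OF assms] by auto
    qed
  qed
  have "ipA A (gs A i) (gsw A j) = ipA A (gs A i) (axis j 1)
        - (\<Sum>k\<in>{k. k<j}. ipA A (axis j 1) (gs A k) * ipA A (gs A i) (gs A k))"
    by (simp add: gsw_def ipA_diff_right ipA_sum_right ipA_scale_right)
  also have "(\<Sum>k\<in>{k. k<j}. ipA A (axis j 1) (gs A k) * ipA A (gs A i) (gs A k))
        = (\<Sum>k\<in>{k. k<j}. ipA A (axis j 1) (gs A k) * (if k = i then 1 else 0))"
    by (rule sum.cong) (auto simp: d)
  also have "\<dots> = ipA A (axis j 1) (gs A i)"
    using less.prems by (simp add: if_distrib sum.delta cong: if_cong)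
  finally have "ipA A (gs A i) (gsw A j) = 0" using sym by simp
  then show ?case by (simp add: gs_eq[of A j] ipA_scale_right)
qed


lemma gs_entry1:
  fixes A :: "real^('n::{finite,wellorder})^('n::{finite,wellorder})"
  shows "((\<chi> j. gs A j) ** (A ** transpose (\<chi> j. gs A j))) $ i $ j = ipA A (gs A i) (gs A j)"
  by (simp add: matrix_matrix_mult_def matrix_vector_mult_def inner_vec_def transpose_def ipA_def sum_distrib_left mult.assoc)

lemma gs_entry2:
  fixes A :: "real^('n::{finite,wellorder})^('n::{finite,wellorder})"
  shows "(A ** transpose (\<chi> j. gs A j)) $ i $ j = ipA A (axis i 1) (gs A j)"
proof -
  have "ipA A (axis i 1) v = (A *v v) $ i" for v by (simp add: ipA_def inner_commute cart_eq_inner_axis)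
  then show ?thesis by (simp add: matrix_matrix_mult_def matrix_vector_mult_def transpose_def)
qed

lemma gs_ip_e:
  assumes "pdA A" "i \<le> j"
  shows "ipA A (axis i 1) (gs A j) = (if i = j then sqrt (ipA A (gsw A j) (gsw A j)) else 0)"
proof -
  have o: "\<And>k. k < j \<Longrightarrow> ipA A (gs A k) (gs A j) = 0" using gs_orth[OF assms(1)] by blast
  have "ipA A (axis i 1) (gs A j) = sqrt (ipA A (gsw A i) (gsw A i)) * ipA A (gs A i) (gs A j)
     + (\<Sum>k\<in>{k. k<i}. ipA A (axis i 1) (gs A k) * ipA A (gs A k) (gs A j))"
    by (subst gs_expand[OF assms(1), of i]) (simp add: ipA_add_left ipA_sum_left ipA_scale_left)
  also have "(\<Sum>k\<in>{k. k<i}. ipA A (axis i 1) (gs A k) * ipA A (gs A k) (gs A j)) = 0"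
    by (rule sum.neutral) (use assms(2) o in auto)
  finally show ?thesis using o[of i] gs_norm[OF assms(1), of j] assms(2) by (auto simp: less_le)
qed

lemma LLt_entry:
  fixes L :: "real^('n::{finite,wellorder})^('n::{finite,wellorder})"
  assumes "lower_triangular L"
  shows "(L ** transpose L) $ i $ j = (\<Sum>k\<in>{k. k<j}. L$i$k * L$j$k) + L$i$j * L$j$j"
proof -
  have U: "(UNIV::'n set) = {k. k<j} \<union> ({j} \<union> {k. j<k})" by auto
  have "(L ** transpose L) $ i $ j = (\<Sum>k\<in>UNIV. L$i$k * L$j$k)"
    by (simp add: matrix_matrix_mult_def transpose_def)
  also have "\<dots> = (\<Sum>k\<in>{k. k<j}. L$i$k * L$j$k) + ((\<Sum>k\<in>{j}. L$i$k * L$j$k) + (\<Sum>k\<in>{k. j<k}. L$i$k * L$j$k))"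
  proof -
    have "(\<Sum>k\<in>UNIV. L$i$k * L$j$k) = (\<Sum>k\<in>{k. k<j} \<union> ({j} \<union> {k. j<k}). L$i$k * L$j$k)"
      by (simp only: U[symmetric])
    also have "\<dots> = (\<Sum>k\<in>{k. k<j}. L$i$k * L$j$k) + (\<Sum>k\<in>{j} \<union> {k. j<k}. L$i$k * L$j$k)"
      by (rule sum.union_disjoint) auto
    also have "(\<Sum>k\<in>{j} \<union> {k. j<k}. L$i$k * L$j$k) = (\<Sum>k\<in>{j}. L$i$k * L$j$k) + (\<Sum>k\<in>{k. j<k}. L$i$k * L$j$k)"
      by (rule sum.union_disjoint) auto
    finally show ?thesis .
  qed
  also have "(\<Sum>k\<in>{k. j<k}. L$i$k * L$j$k) = 0"
    using assms by (auto simp: lower_triangular_def intro!: sum.neutral)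
  finally show ?thesis by simp
qed

lemma chol_unique:
  fixes L1 L2 :: "real^('n::{finite,wellorder})^('n::{finite,wellorder})"
  assumes "lower_triangular L1" "lower_triangular L2" "\<forall>i. L1$i$i > 0" "\<forall>i. L2$i$i > 0"
    "L1 ** transpose L1 = L2 ** transpose L2"
  shows "L1 = L2"
proof -
  have "\<forall>i. L1$i$j = L2$i$j" for j
  proof (induction j rule: less_induct)
    case (less j)
    have S: "(\<Sum>k\<in>{k. k<j}. L1$i$k * L1$j$k) = (\<Sum>k\<in>{k. k<j}. L2$i$k * L2$j$k)" for i
      by (rule sum.cong) (use less.IH in auto)
    have E: "L1$i$j * L1$j$j = L2$i$j * L2$j$j" for i
      using LLt_entry[OF assms(1), of i j] LLt_entry[OF assms(2), of i j] S[of i] assms(5) by simp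
    have "L1$j$j = L2$j$j"
    proof -
      have "(L1$j$j)^2 = (L2$j$j)^2" using E[of j] by (simp add: power2_eq_square)
      then show ?thesis using assms(3,4) by (meson less_imp_le power2_eq_imp_eq)
    qed
    then show ?case using E assms(4) by (metis mult_right_cancel less_irrefl)
  qed
  then show ?thesis by (simp add: vec_eq_iff)
qed

lemma chol_props:
  fixes A :: "real^('n::{finite,wellorder})^('n::{finite,wellorder})"
  assumes sym: "transpose A = A" and lam: "c > 0" and pd: "\<forall>v. v \<bullet> (A *v v) \<ge> c * (norm v)^2"
  shows "lower_triangular (chol A) \<and> chol A ** transpose (chol A) = A \<and> (\<forall>i. (chol A)$i$i \<ge> sqrt c)"
proof -
  have "\<forall>v. v \<noteq> 0 \<longrightarrow> ipA A v v > 0"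
  proof (intro allI impI)
    fix v :: "(real,'n) vec" assume "v \<noteq> 0"
    then have "c * (norm v)^2 > 0" using lam by simp
    then show "ipA A v v > 0" using pd by (smt (verit) ipA_def)
  qed
  then have pdA: "pdA A" using sym by (simp add: pdA_def)
  define G where "G = (\<chi> j. gs A j)"
  define L where "L = A ** transpose G"
  have "G ** (A ** transpose G) = mat 1"
    by (simp add: vec_eq_iff G_def gs_entry1 gs_norm[OF pdA] mat_def)
       (metis gs_orth[OF pdA] ipA_sym sym linorder_neqE)
  then have inv: "(A ** transpose G) ** G = mat 1" by (simp add: matrix_left_right_inverse)
  have Lent: "L $ i $ j = ipA A (axis i 1) (gs A j)" for i j
    unfolding L_def G_def by (rule gs_entry2)
  have LT: "lower_triangular L"
    unfolding lower_triangular_def using gs_ip_e[OF pdA] Lent by (auto simp: less_le)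
  have LD: "L $ i $ i = sqrt (ipA A (gsw A i) (gsw A i))" for i
    using gs_ip_e[OF pdA, of i i] Lent by simp
  have LL: "L ** transpose L = A"
  proof -
    have "L ** transpose L = A ** transpose G ** (G ** A)"
      by (simp add: L_def matrix_transpose_mul sym)
    also have "\<dots> = ((A ** transpose G) ** G) ** A" by (simp add: matrix_mul_assoc)
    finally show ?thesis using inv by simp
  qed
  have LB: "L $ i $ i \<ge> sqrt c" for i
  proof -
    have "norm (gsw A i) \<ge> 1" using component_le_norm_cart[of "gsw A i" i] gsw_diag[of A i] by simp
    then have "(norm (gsw A i))^2 \<ge> 1" by (simp add: one_le_power)
    then have "c \<le> c * (norm (gsw A i))^2" using lam by simp
    also have "\<dots> \<le> ipA A (gsw A i) (gsw A i)" using pd by (simp add: ipA_def)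
    finally show ?thesis using LD by simp
  qed
  have pos: "\<forall>i. L $ i $ i > 0" using LB lam by (meson less_le_trans real_sqrt_gt_0_iff)
  have "chol A = L"
    unfolding chol_def
  proof (rule the_equality)
    show "lower_triangular L \<and> (\<forall>i. 0 < L $ i $ i) \<and> L ** transpose L = A" using LT pos LL by simp
    fix L' assume "lower_triangular L' \<and> (\<forall>i. 0 < L' $ i $ i) \<and> L' ** transpose L' = A"
    then show "L' = L" using chol_unique[of L' L] LT pos LL by auto
  qed
  then show ?thesis using LT LL LB by simp
qed




lemma nn_std: "(\<integral>\<^sup>+x. ennreal (std_normal_density x) \<partial>lborel) = 1"
proof -
  interpret prob_space "density lborel (\<lambda>x. ennreal (std_normal_density x))"
    using prob_space_normal_density[where \<mu>=0 and \<sigma>=1] by simp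
  have "emeasure (density lborel (\<lambda>x. ennreal (std_normal_density x))) UNIV = 1"
    using emeasure_space_1 by simp
  then show ?thesis by (simp add: emeasure_density)
qed

lemma Basis_cart_real: "(Basis :: (real^'n) set) = (\<lambda>i. axis i 1) ` UNIV"
  by (auto simp: Basis_vec_def)

lemma prob_std_gauss: "prob_space (std_gauss :: (real^'n) measure)"
proof
  have m: "(\<lambda>z::real^'n. ennreal (\<Prod>i\<in>UNIV. std_normal_density (z$i))) \<in> borel_measurable borel"
    by measurable
  have eq: "ennreal (\<Prod>i\<in>UNIV. std_normal_density (z$i)) = (\<Prod>b\<in>Basis. ennreal (std_normal_density (z \<bullet> b)))"
    for z :: "real^'n"
  proof -
    have "ennreal (\<Prod>i\<in>UNIV. std_normal_density (z$i)) = (\<Prod>i\<in>UNIV. ennreal (std_normal_density (z$i)))"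
      by (rule prod_ennreal[symmetric]) (simp add: normal_density_nonneg)
    also have "\<dots> = (\<Prod>i\<in>UNIV. ennreal (std_normal_density (z \<bullet> axis i 1)))"
      by (simp add: cart_eq_inner_axis)
    also have "\<dots> = (\<Prod>b\<in>Basis. ennreal (std_normal_density (z \<bullet> b)))"
      unfolding Basis_cart_real by (subst prod.reindex) (auto simp: inj_on_def axis_eq_axis)
    finally show ?thesis .
  qed
  have "emeasure (std_gauss :: (real^'n) measure) (space std_gauss)
        = (\<integral>\<^sup>+z. ennreal (\<Prod>i\<in>UNIV. std_normal_density (z$i)) \<partial>(lborel :: (real^'n) measure))"
    unfolding std_gauss_def using m by (simp add: emeasure_density)
  also have "\<dots> = (\<integral>\<^sup>+z. (\<Prod>b\<in>Basis. ennreal (std_normal_density (z \<bullet> b))) \<partial>(lborel :: (real^'n) measure))"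
    by (simp add: eq)
  also have "\<dots> = (\<Prod>b\<in>(Basis :: (real^'n) set). (\<integral>\<^sup>+x. ennreal (std_normal_density x) \<partial>lborel))"
    by (rule nn_integral_lborel_prod) auto
  also have "\<dots> = 1" by (simp add: nn_std)
  finally show "emeasure (std_gauss :: (real^'n) measure) (space std_gauss) = 1" .
qed

lemma gauss_prob:
  fixes S :: "real^'n^'n"
  defines "\<nu> \<equiv> distr std_gauss borel (\<lambda>z. (SOME A::real^'n^'n. A ** transpose A = S) *v z)"
  shows "prob_space \<nu>" "sets \<nu> = sets borel" "gauss_cdf S b = measure \<nu> {y. \<forall>j. y$j \<le> b$j}"
proof -
  interpret prob_space "std_gauss :: (real^'n) measure" by (rule prob_std_gauss)
  have m: "(\<lambda>z. (SOME A::real^'n^'n. A ** transpose A = S) *v z) \<in> borel_measurable borel"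
    by (intro borel_measurable_continuous_onI linear_continuous_on matrix_vector_mul_bounded_linear)
  show "prob_space \<nu>" unfolding \<nu>_def
    by (rule prob_space_distr) (use m in \<open>simp add: std_gauss_def\<close>)
  show "sets \<nu> = sets borel" by (simp add: \<nu>_def)
  show "gauss_cdf S b = measure \<nu> {y. \<forall>j. y$j \<le> b$j}" by (simp add: \<nu>_def gauss_cdf_def)
qed

lemma orthant_borel: "{y::real^'n. \<forall>j. y$j \<le> c j} \<in> sets borel"
proof -
  have "{y::real^'n. \<forall>j. y$j \<le> c j} = (\<Inter>j. {y. y$j \<le> c j})" by auto
  moreover have "{y::real^'n. y$j \<le> c j} \<in> sets borel" for j by measurable
  ultimately show ?thesis by auto
qed

lemma coord_le_borel: "{y::real^'n. y$j \<le> c} \<in> sets borel"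
  by measurable

lemma gauss_upper:
  fixes S :: "real^'n^'n"
  shows "(\<lambda>n. gauss_cdf S (\<chi> i. real n)) \<longlonglongrightarrow> 1"
proof -
  define \<nu> where "\<nu> = distr std_gauss borel (\<lambda>z. (SOME A::real^'n^'n. A ** transpose A = S) *v z)"
  interpret prob_space \<nu> unfolding \<nu>_def by (rule gauss_prob(1))
  have sets: "sets \<nu> = sets borel" unfolding \<nu>_def by (rule gauss_prob(2))
  have sp: "space \<nu> = UNIV" using sets_eq_imp_space_eq[OF sets] by simp
  define A where "A n = {y::real^'n. \<forall>j. y$j \<le> real n}" for n
  have "(\<lambda>n. measure \<nu> (A n)) \<longlonglongrightarrow> measure \<nu> (\<Union>(range A))"
  proof (rule finite_Lim_measure_incseq)
    have "A n \<in> sets borel" for n unfolding A_def by (rule orthant_borel)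
    then show "range A \<subseteq> sets \<nu>" using sets by auto
    show "incseq A"
      unfolding incseq_def
    proof (intro allI impI subsetI)
      fix m n :: nat and y assume mn: "m \<le> n" and y: "y \<in> A m"
      have "real m \<le> real n" using mn by simp
      have "y$j \<le> real n" for j
      proof -
        have "y$j \<le> real m" using y by (simp add: A_def)
        then show ?thesis using \<open>real m \<le> real n\<close> by linarith
      qed
      then show "y \<in> A n" by (simp add: A_def)
    qed
  qed
  moreover have "\<Union>(range A) = space \<nu>"
  proof -
    have "\<exists>n. \<forall>j. y$j \<le> real n" for y :: "real^'n"
    proof -
      obtain n where n: "Max (range (\<lambda>j. y$j)) \<le> real n" using real_arch_simple by blast
      have "y$j \<le> real n" for j
      proof -
        have "y$j \<le> Max (range (\<lambda>j. y$j))" by (rule Max_ge) auto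
        then show ?thesis using n by linarith
      qed
      then show ?thesis by blast
    qed
    then show ?thesis unfolding A_def sp by blast
  qed
  ultimately have lim: "(\<lambda>n. measure \<nu> (A n)) \<longlonglongrightarrow> 1" using prob_space by simp
  have eq: "(\<lambda>n. gauss_cdf S (\<chi> i. real n)) = (\<lambda>n. measure \<nu> (A n))"
  proof
    fix n
    show "gauss_cdf S (\<chi> i. real n) = measure \<nu> (A n)"
      unfolding \<nu>_def A_def using gauss_prob(3)[of S "\<chi> i. real n"] by simp
  qed
  show ?thesis unfolding eq by (rule lim)
qed

lemma gauss_lower:
  fixes S :: "real^'n^'n"
  shows "\<exists>f. f \<longlonglongrightarrow> 0 \<and> (\<forall>n b. b$j \<le> - real n \<longrightarrow> gauss_cdf S b \<le> f n)"
proof -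
  define \<nu> where "\<nu> = distr std_gauss borel (\<lambda>z. (SOME A::real^'n^'n. A ** transpose A = S) *v z)"
  interpret prob_space \<nu> unfolding \<nu>_def by (rule gauss_prob(1))
  have sets: "sets \<nu> = sets borel" unfolding \<nu>_def by (rule gauss_prob(2))
  define A where "A n = {y::real^'n. y$j \<le> - real n}" for n
  have "(\<lambda>n. measure \<nu> (A n)) \<longlonglongrightarrow> measure \<nu> (\<Inter>(range A))"
  proof (rule finite_Lim_measure_decseq)
    have "A n \<in> sets borel" for n unfolding A_def by (rule coord_le_borel)
    then show "range A \<subseteq> sets \<nu>" using sets by auto
    show "decseq A" unfolding decseq_def A_def by auto
  qed
  moreover have "\<Inter>(range A) = {}"
  proof -
    have "\<exists>n. \<not> y$j \<le> - real n" for y :: "real^'n"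
    proof -
      obtain n where "- y$j < real n" using reals_Archimedean2 by blast
      then have "\<not> y$j \<le> - real n" by linarith
      then show ?thesis by blast
    qed
    then show ?thesis unfolding A_def by blast
  qed
  ultimately have lim: "(\<lambda>n. measure \<nu> (A n)) \<longlonglongrightarrow> 0" by simp
  have "gauss_cdf S b \<le> measure \<nu> (A n)" if "b$j \<le> - real n" for n b
  proof -
    have "gauss_cdf S b = measure \<nu> {y. \<forall>j. y$j \<le> b$j}"
      unfolding \<nu>_def using gauss_prob(3)[of S b] by simp
    also have "\<dots> \<le> measure \<nu> (A n)"
    proof (rule finite_measure_mono)
      show "{y. \<forall>j. y$j \<le> b$j} \<subseteq> A n" unfolding A_def using that by (auto intro: order_trans)
      show "A n \<in> sets \<nu>" unfolding A_def sets by (rule coord_le_borel)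
    qed
    finally show ?thesis .
  qed
  then show ?thesis using lim by blast
qed




lemma van_union:
  assumes "vanishing_in_prob M E1" "vanishing_in_prob M E2"
  shows "vanishing_in_prob M (\<lambda>T \<omega>. E1 T \<omega> \<or> E2 T \<omega>)"
  unfolding vanishing_in_prob_def
proof (intro allI impI)
  fix \<delta> :: real assume d: "\<delta> > 0"
  have h: "\<delta>/2 > 0" using d by simp
  have e1: "eventually (\<lambda>T. \<exists>A\<in>sets M. {\<omega>\<in>space M. E1 T \<omega>} \<subseteq> A \<and> measure M A < \<delta>/2) sequentially"
    using assms(1) h unfolding vanishing_in_prob_def by blast
  have e2: "eventually (\<lambda>T. \<exists>A\<in>sets M. {\<omega>\<in>space M. E2 T \<omega>} \<subseteq> A \<and> measure M A < \<delta>/2) sequentially"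
    using assms(2) h unfolding vanishing_in_prob_def by blast
  show "eventually (\<lambda>T. \<exists>A\<in>sets M. {\<omega>\<in>space M. E1 T \<omega> \<or> E2 T \<omega>} \<subseteq> A \<and> measure M A < \<delta>) sequentially"
    using e1 e2
  proof eventually_elim
    case (elim T)
    then obtain A1 A2 where A: "A1 \<in> sets M" "A2 \<in> sets M" "{\<omega>\<in>space M. E1 T \<omega>} \<subseteq> A1"
      "{\<omega>\<in>space M. E2 T \<omega>} \<subseteq> A2" "measure M A1 < \<delta>/2" "measure M A2 < \<delta>/2" by blast
    have "measure M (A1 \<union> A2) \<le> measure M A1 + measure M A2" by (rule measure_Un_le) (use A in auto)
    then have "measure M (A1 \<union> A2) < \<delta>" using A by linarith
    moreover have "A1 \<union> A2 \<in> sets M" using A by auto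
    moreover have "{\<omega>\<in>space M. E1 T \<omega> \<or> E2 T \<omega>} \<subseteq> A1 \<union> A2" using A by blast
    ultimately show ?case by blast
  qed
qed

lemma van_false: "vanishing_in_prob M (\<lambda>T \<omega>. False)"
  unfolding vanishing_in_prob_def by (auto intro!: bexI[of _ "{}"])

lemma van_finite:
  assumes "finite I" "\<And>i. i \<in> I \<Longrightarrow> vanishing_in_prob M (E i)"
  shows "vanishing_in_prob M (\<lambda>T \<omega>. \<exists>i\<in>I. E i T \<omega>)"
  using assms
proof (induction I rule: finite_induct)
  case empty then show ?case using van_false by simp
next
  case (insert x F)
  have "vanishing_in_prob M (\<lambda>T \<omega>. E x T \<omega> \<or> (\<exists>i\<in>F. E i T \<omega>))"
    by (rule van_union) (use insert in auto)
  then show ?case by simp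
qed

lemma van_mono:
  assumes "vanishing_in_prob M E'" "eventually (\<lambda>T. \<forall>\<omega>\<in>space M. E T \<omega> \<longrightarrow> E' T \<omega>) sequentially"
  shows "vanishing_in_prob M E"
  unfolding vanishing_in_prob_def
proof (intro allI impI)
  fix \<delta> :: real assume d: "\<delta> > 0"
  have e1: "eventually (\<lambda>T. \<exists>A\<in>sets M. {\<omega>\<in>space M. E' T \<omega>} \<subseteq> A \<and> measure M A < \<delta>) sequentially"
    using assms(1) d unfolding vanishing_in_prob_def by blast
  show "eventually (\<lambda>T. \<exists>A\<in>sets M. {\<omega>\<in>space M. E T \<omega>} \<subseteq> A \<and> measure M A < \<delta>) sequentially"
    using e1 assms(2)
  proof eventually_elim
    case (elim T)
    then obtain A where "A \<in> sets M" "{\<omega>\<in>space M. E' T \<omega>} \<subseteq> A" "measure M A < \<delta>" by blast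
    moreover have "{\<omega>\<in>space M. E T \<omega>} \<subseteq> {\<omega>\<in>space M. E' T \<omega>}" using elim by blast
    ultimately show ?case by blast
  qed
qed

lemma van_AE:
  assumes "eventually (\<lambda>T. AE \<omega> in M. \<not> E T \<omega>) sequentially"
  shows "vanishing_in_prob M E"
  unfolding vanishing_in_prob_def
proof (intro allI impI)
  fix \<delta> :: real assume d: "\<delta> > 0"
  show "eventually (\<lambda>T. \<exists>A\<in>sets M. {\<omega>\<in>space M. E T \<omega>} \<subseteq> A \<and> measure M A < \<delta>) sequentially"
    using assms
  proof eventually_elim
    case (elim T)
    then obtain N where N: "{\<omega>\<in>space M. \<not>\<not> E T \<omega>} \<subseteq> N" "emeasure M N = 0" "N \<in> sets M"
      by (rule AE_E)
    have "measure M N = 0" using N(2) by (simp add: measure_def)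
    then show ?case using N d by auto
  qed
qed

lemma conv_van:
  assumes "conv_in_prob M Y c" "\<epsilon> > 0"
  shows "vanishing_in_prob M (\<lambda>T \<omega>. dist (Y T \<omega>) c > \<epsilon>)"
  using assms unfolding conv_in_prob_def by blast

lemma prob_on_D:
  assumes "prob_on \<Theta> q" "\<Theta> \<in> sets borel"
  obtains \<mu> where "prob_space \<mu>" "sets \<mu> = sets (restrict_space borel \<Theta>)" "space \<mu> = \<Theta>"
    "\<And>B. B \<in> sets \<mu> \<Longrightarrow> measure \<mu> B = q B"
    "\<And>B. B \<in> sets \<mu> \<longleftrightarrow> B \<subseteq> \<Theta> \<and> B \<in> sets borel"
proof -
  obtain \<mu> where m: "prob_space \<mu>" "sets \<mu> = sets (restrict_space borel \<Theta>)" "\<forall>B\<in>sets \<mu>. measure \<mu> B = q B"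
    using assms(1) unfolding prob_on_def by blast
  have sp: "space \<mu> = \<Theta>" using sets_eq_imp_space_eq[OF m(2)] by (simp add: space_restrict_space)
  have "B \<in> sets \<mu> \<longleftrightarrow> B \<subseteq> \<Theta> \<and> B \<in> sets borel" for B
    unfolding m(2) by (rule sets_restrict_space_iff) (use assms(2) in simp)
  then show ?thesis using that m sp by blast
qed

lemma prok_bound:
  fixes \<Theta> :: "'a::metric_space set"
  assumes "prob_on \<Theta> q" "\<theta>0 \<in> \<Theta>" "\<Theta> \<in> sets borel" "\<epsilon> > 0"
    and small: "q {y\<in>\<Theta>. \<epsilon> \<le> dist y \<theta>0} \<le> \<epsilon>"
  shows "0 \<le> prokhorov \<Theta> q (\<lambda>A. indicator A \<theta>0) \<and> prokhorov \<Theta> q (\<lambda>A. indicator A \<theta>0) \<le> \<epsilon>"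
proof -
  obtain \<mu> where mu: "prob_space \<mu>" "sets \<mu> = sets (restrict_space borel \<Theta>)" "space \<mu> = \<Theta>"
    "\<And>B. B \<in> sets \<mu> \<Longrightarrow> measure \<mu> B = q B" "\<And>B. B \<in> sets \<mu> \<longleftrightarrow> B \<subseteq> \<Theta> \<and> B \<in> sets borel"
    using prob_on_D[OF assms(1,3)] by metis
  interpret P: prob_space \<mu> by (rule mu(1))
  define Bad where "Bad = {y\<in>\<Theta>. \<epsilon> \<le> dist y \<theta>0}"
  have "{y. \<epsilon> \<le> dist y \<theta>0} = - ball \<theta>0 \<epsilon>" by (auto simp: dist_commute)
  then have "{y. \<epsilon> \<le> dist y \<theta>0} \<in> sets borel" by (metis borel_closed closed_Compl open_ball)
  then have "\<Theta> \<inter> {y. \<epsilon> \<le> dist y \<theta>0} \<in> sets borel" using assms(3) by auto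
  then have Bads: "Bad \<in> sets \<mu>" unfolding mu(5) Bad_def by (simp add: Int_def)
  have qB: "q Bad \<le> \<epsilon>" using small by (simp add: Bad_def)
  define Sset where "Sset = {e. e > 0 \<and> (\<forall>A\<in>sets (restrict_space borel \<Theta>).
        q A \<le> indicator (enlarge \<Theta> A e) \<theta>0 + e \<and> indicator A \<theta>0 \<le> q (enlarge \<Theta> A e) + e)}"
  have "\<epsilon> \<in> Sset"
    unfolding Sset_def
  proof (intro CollectI conjI ballI assms(4))
    fix A assume "A \<in> sets (restrict_space borel \<Theta>)"
    then have As: "A \<in> sets \<mu>" using mu(2) by simp
    then have AT: "A \<subseteq> \<Theta>" using mu(5) by blast
    define E where "E = enlarge \<Theta> A \<epsilon>"
    have "E = \<Theta> \<inter> (\<Union>a\<in>A. ball a \<epsilon>)" by (auto simp: E_def enlarge_def)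
    moreover have "(\<Union>a\<in>A. ball a \<epsilon>) \<in> sets borel" by (intro borel_open open_UN) auto
    ultimately have Es: "E \<in> sets \<mu>" using assms(3) unfolding mu(5) by auto
    have qA: "q A = measure \<mu> A" using mu(4)[OF As] by simp
    have qE: "q E = measure \<mu> E" using mu(4)[OF Es] by simp
    show "q A \<le> indicator (enlarge \<Theta> A \<epsilon>) \<theta>0 + \<epsilon>"
    proof (cases "\<theta>0 \<in> E")
      case True
      have "measure \<mu> A \<le> 1" by (rule P.prob_le_1)
      moreover have "indicator (enlarge \<Theta> A \<epsilon>) \<theta>0 = (1::real)" using True by (simp add: E_def)
      ultimately show ?thesis using qA assms(4) by linarith
    next
      case False
      have "A \<subseteq> Bad"
      proof
        fix a assume a: "a \<in> A"
        have "\<not> dist a \<theta>0 < \<epsilon>" using False a assms(2) by (auto simp: E_def enlarge_def)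
        then show "a \<in> Bad" using a AT by (auto simp: Bad_def)
      qed
      then have "measure \<mu> A \<le> measure \<mu> Bad" using Bads by (intro P.finite_measure_mono)
      also have "\<dots> = q Bad" using mu(4)[OF Bads] by simp
      finally show ?thesis using False qA qB by (simp add: E_def)
    qed
    show "indicator A \<theta>0 \<le> q (enlarge \<Theta> A \<epsilon>) + \<epsilon>"
    proof (cases "\<theta>0 \<in> A")
      case True
      have "\<Theta> - Bad \<subseteq> E"
      proof
        fix y assume "y \<in> \<Theta> - Bad"
        then have "y \<in> \<Theta>" "dist \<theta>0 y < \<epsilon>" by (auto simp: Bad_def dist_commute)
        then show "y \<in> E" using True by (auto simp: E_def enlarge_def)
      qed
      then have "measure \<mu> (space \<mu> - Bad) \<le> measure \<mu> E" using Es mu(3) by (intro P.finite_measure_mono) auto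
      moreover have "measure \<mu> (space \<mu> - Bad) = 1 - measure \<mu> Bad" by (rule P.prob_compl[OF Bads])
      moreover have "measure \<mu> Bad = q Bad" using mu(4)[OF Bads] by simp
      ultimately show ?thesis using True qE qB by (simp add: E_def)
    next
      case False
      have "0 \<le> measure \<mu> E" by simp
      then show ?thesis using False qE assms(4) by (simp add: E_def)
    qed
  qed
  moreover have "bdd_below Sset" unfolding Sset_def by (rule bdd_belowI[of _ 0]) auto
  ultimately have le: "Inf Sset \<le> \<epsilon>" by (rule cInf_lower)
  have ge: "0 \<le> Inf Sset"
    using \<open>\<epsilon> \<in> Sset\<close> by (intro cInf_greatest) (auto simp: Sset_def)
  show ?thesis using le ge unfolding prokhorov_def Sset_def by simp
qed


lemma orthant_in_borel: "{y::real^'n. \<forall>j. y$j \<le> c j} \<in> sets borel"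
proof -
  have "{y::real^'n. \<forall>j. y$j \<le> c j} = (\<Inter>j. {y. y$j \<le> c j})" by auto
  moreover have "{y::real^'n. y$j \<le> c j} \<in> sets borel" for j by measurable
  ultimately show ?thesis by auto
qed

lemma bad_bound:
  fixes \<Theta> :: "(real^'p) set" and Pu :: "real^'p" and Pb :: "'p \<Rightarrow> real^'p"
  assumes "prob_on \<Theta> q" "\<Theta> \<in> sets borel" "r > 0" "real CARD('p) * r \<le> \<epsilon>"
    and up: "\<forall>i. Pu$i < \<theta>0$i + r" and lo: "\<forall>j. \<theta>0$j - r < Pb j $ j"
    and ord: "\<forall>j k. k \<noteq> j \<longrightarrow> Pu$k \<le> Pb j $ k"
  shows "q {y\<in>\<Theta>. \<epsilon> \<le> dist y \<theta>0} \<le> (1 - cdf_of \<Theta> q Pu) + (\<Sum>j\<in>UNIV. cdf_of \<Theta> q (Pb j))"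
proof -
  obtain \<mu> where mu: "prob_space \<mu>" "sets \<mu> = sets (restrict_space borel \<Theta>)" "space \<mu> = \<Theta>"
    "\<And>B. B \<in> sets \<mu> \<Longrightarrow> measure \<mu> B = q B" "\<And>B. B \<in> sets \<mu> \<longleftrightarrow> B \<subseteq> \<Theta> \<and> B \<in> sets borel"
    using prob_on_D[OF assms(1,2)] by metis
  interpret P: prob_space \<mu> by (rule mu(1))
  define C where "C x = {y\<in>\<Theta>. \<forall>j. y$j \<le> x$j}" for x :: "real^'p"
  have Cs: "C x \<in> sets \<mu>" for x
  proof -
    have "C x = \<Theta> \<inter> {y. \<forall>j. y$j \<le> x$j}" by (auto simp: C_def)
    then show ?thesis unfolding mu(5) using assms(2) orthant_in_borel[of "\<lambda>j. x$j"] by auto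
  qed
  define Bad where "Bad = {y\<in>\<Theta>. \<epsilon> \<le> dist y \<theta>0}"
  have "{y. \<epsilon> \<le> dist y \<theta>0} = - ball \<theta>0 \<epsilon>" by (auto simp: dist_commute)
  then have "{y. \<epsilon> \<le> dist y \<theta>0} \<in> sets borel" by (metis borel_closed closed_Compl open_ball)
  then have "\<Theta> \<inter> {y. \<epsilon> \<le> dist y \<theta>0} \<in> sets borel" using assms(2) by auto
  then have Bads: "Bad \<in> sets \<mu>" unfolding mu(5) Bad_def by (simp add: Int_def)
  have incl: "Bad \<subseteq> (\<Theta> - C Pu) \<union> (\<Union>j\<in>UNIV. C (Pb j))"
  proof
    fix y assume yB: "y \<in> Bad"
    then have yT: "y \<in> \<Theta>" and yd: "\<epsilon> \<le> dist y \<theta>0" by (auto simp: Bad_def)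
    show "y \<in> (\<Theta> - C Pu) \<union> (\<Union>j\<in>UNIV. C (Pb j))"
    proof (cases "y \<in> C Pu")
      case False then show ?thesis using yT by auto
    next
      case True
      then have yle: "\<forall>j. y$j \<le> Pu$j" by (auto simp: C_def)
      have "\<exists>j. y$j \<le> \<theta>0$j - r"
      proof (rule ccontr)
        assume "\<not> ?thesis"
        then have "\<forall>j. \<theta>0$j - r < y$j" by (meson not_le)
        then have "\<bar>(y - \<theta>0)$j\<bar> < r" for j using yle up by (smt (verit) vector_minus_component)
        then have "(\<Sum>j\<in>UNIV. \<bar>(y - \<theta>0)$j\<bar>) < (\<Sum>j\<in>(UNIV::'p set). r)"
          by (intro sum_strict_mono) auto
        then have "norm (y - \<theta>0) < real CARD('p) * r"
          using norm_le_l1_cart[of "y - \<theta>0"] by simp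
        then have "dist y \<theta>0 < \<epsilon>" using assms(4) by (simp add: dist_norm)
        then show False using yd by simp
      qed
      then obtain j where j: "y$j \<le> \<theta>0$j - r" by blast
      have "y$k \<le> Pb j $ k" for k
      proof (cases "k = j")
        case True then show ?thesis using j lo by (smt (verit))
      next
        case False then show ?thesis using yle ord by (meson order_trans)
      qed
      then have "y \<in> C (Pb j)" using yT by (auto simp: C_def)
      then show ?thesis by blast
    qed
  qed
  have "measure \<mu> Bad \<le> measure \<mu> ((\<Theta> - C Pu) \<union> (\<Union>j\<in>UNIV. C (Pb j)))"
    using incl Cs mu(3) by (intro P.finite_measure_mono) auto
  also have "\<dots> \<le> measure \<mu> (\<Theta> - C Pu) + measure \<mu> (\<Union>j\<in>UNIV. C (Pb j))"
    using Cs mu(3) by (intro measure_Un_le) auto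
  also have "measure \<mu> (\<Union>j\<in>UNIV. C (Pb j)) \<le> (\<Sum>j\<in>UNIV. measure \<mu> (C (Pb j)))"
    using Cs by (intro P.finite_measure_subadditive_finite) auto
  also have "measure \<mu> (\<Theta> - C Pu) = 1 - measure \<mu> (C Pu)"
    using P.prob_compl[OF Cs[of Pu]] mu(3) by simp
  finally have "measure \<mu> Bad \<le> 1 - measure \<mu> (C Pu) + (\<Sum>j\<in>UNIV. measure \<mu> (C (Pb j)))" by simp
  moreover have "measure \<mu> (C x) = cdf_of \<Theta> q x" for x
    using mu(4)[OF Cs[of x]] by (simp add: C_def cdf_of_def)
  moreover have "measure \<mu> Bad = q Bad" using mu(4)[OF Bads] by simp
  ultimately show ?thesis by (simp add: Bad_def)
qed




lemma posdef_margin: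
  fixes S :: "real^('n::{finite,wellorder})^('n::{finite,wellorder})"
  assumes "pos_def S"
  shows "\<exists>c>0. \<forall>v. v \<bullet> (S *v v) \<ge> c * (norm v)^2"
proof -
  have cont: "continuous_on (sphere 0 1) (\<lambda>v. v \<bullet> (S *v v))"
    by (intro continuous_intros linear_continuous_on matrix_vector_mul_bounded_linear)
  have "axis undefined 1 \<in> sphere (0::(real,'n) vec) 1" by simp
  then have ne: "sphere (0::(real,'n) vec) 1 \<noteq> {}" by blast
  obtain x where x: "x \<in> sphere 0 1" "\<forall>y\<in>sphere 0 1. x \<bullet> (S *v x) \<le> y \<bullet> (S *v y)"
    using continuous_attains_inf[OF compact_sphere ne cont] by blast
  have "x \<noteq> 0" using x(1) by auto
  then have c: "x \<bullet> (S *v x) > 0" using assms by (simp add: pos_def_def)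
  have "v \<bullet> (S *v v) \<ge> (x \<bullet> (S *v x)) * (norm v)^2" for v
  proof (cases "v = 0")
    case True then show ?thesis by simp
  next
    case False
    define u where "u = (1 / norm v) *\<^sub>R v"
    have "u \<in> sphere 0 1" using False by (simp add: u_def)
    then have "x \<bullet> (S *v x) \<le> u \<bullet> (S *v u)" using x(2) by blast
    also have "u \<bullet> (S *v u) = (v \<bullet> (S *v v)) / (norm v)^2"
      by (simp add: u_def matrix_vector_mult_scaleR power2_eq_square divide_simps)
    finally show ?thesis using False by (simp add: field_simps)
  qed
  then show ?thesis using c by blast
qed

lemma matrix_entry_le_norm:
  fixes B :: "real^'n^'m"
  shows "\<bar>B$i$j\<bar> \<le> norm B"
proof -
  have a: "\<bar>B$i$j\<bar> \<le> norm (B$i)" by (rule component_le_norm_cart)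
  have b: "norm (B$i) \<le> norm B" unfolding norm_vec_def by (rule member_le_L2_set) simp_all
  show ?thesis using a b by linarith
qed

lemma perturb:
  fixes S St :: "real^('n::{finite,wellorder})^('n::{finite,wellorder})"
  assumes marg: "\<forall>v. v \<bullet> (S *v v) \<ge> c * (norm v)^2"
    and d: "norm (St - S) \<le> \<delta>" and dc: "real CARD('n) * real CARD('n) * \<delta> \<le> c / 2"
  shows "\<forall>v. v \<bullet> (St *v v) \<ge> (c/2) * (norm v)^2"
proof
  fix v :: "(real,'n) vec"
  define B where "B = St - S"
  have "\<bar>B$i$j\<bar> \<le> \<delta>" for i j using matrix_entry_le_norm[of B i j] d by (simp add: B_def)
  then have on: "onorm ((*v) B) \<le> real CARD('n) * real CARD('n) * \<delta>"
    by (rule onorm_le_matrix_component)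
  have "norm (B *v v) \<le> onorm ((*v) B) * norm v" by (rule onorm) simp
  also have "\<dots> \<le> (c/2) * norm v" using on by (intro mult_right_mono) (use dc in auto)
  finally have nb: "norm (B *v v) \<le> (c/2) * norm v" .
  have "\<bar>v \<bullet> (B *v v)\<bar> \<le> norm v * norm (B *v v)" by (rule Cauchy_Schwarz_ineq2)
  also have "\<dots> \<le> norm v * ((c/2) * norm v)" using nb by (intro mult_left_mono) auto
  finally have "\<bar>v \<bullet> (B *v v)\<bar> \<le> (c/2) * (norm v)^2" by (simp add: power2_eq_square mult_ac)
  moreover have "v \<bullet> (St *v v) = v \<bullet> (S *v v) + v \<bullet> (B *v v)"
    by (simp add: B_def matrix_vector_mult_diff_rdistrib inner_diff_right)
  ultimately show "v \<bullet> (St *v v) \<ge> (c/2) * (norm v)^2" using marg[rule_format, of v] by linarith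
qed

lemma chol_entry_bound:
  fixes A :: "real^('n::{finite,wellorder})^('n::{finite,wellorder})"
  assumes "L ** transpose L = A"
  shows "\<bar>L$i$k\<bar> \<le> sqrt \<bar>A$i$i\<bar>"
proof -
  have "A$i$i = (\<Sum>l\<in>UNIV. (L$i$l)^2)"
    using assms[symmetric] by (simp add: matrix_matrix_mult_def transpose_def power2_eq_square)
  also have "\<dots> \<ge> (L$i$k)^2" by (rule member_le_sum) auto
  finally have "(L$i$k)^2 \<le> \<bar>A$i$i\<bar>" by simp
  then show ?thesis using real_sqrt_le_mono by fastforce
qed

definition rk :: "'n::{finite,wellorder} \<Rightarrow> nat" where "rk k = card {l. l < k}"

lemma rk_mono: "l < k \<Longrightarrow> rk l < rk k"
  unfolding rk_def by (rule psubset_card_mono) auto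

definition cvec :: "real \<Rightarrow> ('n::{finite,wellorder}) \<Rightarrow> real \<Rightarrow> real^('n::{finite,wellorder})" where
  "cvec R j m = (\<chi> k. if k < j then 0 else if k = j then - m else m * R ^ rk k)"

lemma cvec_nonneg:
  fixes L :: "real^('n::{finite,wellorder})^('n::{finite,wellorder})"
  assumes LT: "lower_triangular L" and Cb: "\<forall>i k. \<bar>L$i$k\<bar> \<le> C" and c0: "c0 > 0" "\<forall>i. L$i$i \<ge> c0"
    and m: "m \<ge> 0" and R: "R \<ge> 1" "c0 * R \<ge> C * real CARD('n)"
    and kj: "k \<noteq> j"
  shows "(L *v cvec R j m) $ k \<ge> 0"
proof -
  define c where "c = cvec R j m"
  have Lz: "L$k$l = 0" if "k < l" for l using LT that by (simp add: lower_triangular_def)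
  have sum_eq: "(L *v c) $ k = (\<Sum>l\<in>UNIV. L$k$l * c$l)" by (simp add: matrix_vector_mult_def)
  show ?thesis
  proof (cases "k < j")
    case True
    have "L$k$l * c$l = 0" for l
    proof (cases "k < l")
      case True then show ?thesis using Lz by simp
    next
      case False then have "l < j" using \<open>k < j\<close> by auto
      then show ?thesis by (simp add: c_def cvec_def)
    qed
    then have "(\<Sum>l\<in>UNIV. L$k$l * c$l) = 0" by (intro sum.neutral) auto
    then show ?thesis using sum_eq by (simp add: c_def)
  next
    case False
    then have jk: "j < k" using kj by auto
    have C0: "C \<ge> 0" using Cb[rule_format, of k k] by linarith
    have rkpos: "rk k \<ge> 1" using rk_mono[OF jk] by simp
    define M where "M = m * R ^ (rk k - 1)"
    have M0: "M \<ge> 0" using m R by (simp add: M_def)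
    have cl: "\<bar>c$l\<bar> \<le> M" if "l < k" for l
    proof -
      consider "l < j" | "l = j" | "j < l" using less_linear by blast
      then show ?thesis
      proof cases
        case 1 then show ?thesis using M0 by (simp add: c_def cvec_def)
      next
        case 2
        have "1 \<le> R ^ (rk k - 1)" using R by simp
        then have "m * 1 \<le> m * R ^ (rk k - 1)" using m by (intro mult_left_mono) auto
        then show ?thesis using 2 m by (simp add: c_def cvec_def M_def)
      next
        case 3
        have "rk l \<le> rk k - 1" using rk_mono[OF that] by simp
        then have "R ^ rk l \<le> R ^ (rk k - 1)" using R by (intro power_increasing) auto
        then have "m * R ^ rk l \<le> M" using m by (simp add: M_def mult_left_mono)
        moreover have "\<not> l < j" "l \<noteq> j" using 3 by auto
        ultimately show ?thesis using m R by (simp add: c_def cvec_def)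
      qed
    qed
    have trm: "L$k$l * c$l \<ge> - (C * M)" if "l \<noteq> k" for l
    proof (cases "k < l")
      case True then show ?thesis using Lz C0 M0 by simp
    next
      case False
      then have "l < k" using that by auto
      have "\<bar>L$k$l * c$l\<bar> \<le> C * M"
        unfolding abs_mult using Cb cl[OF \<open>l < k\<close>] C0 by (intro mult_mono) auto
      then show ?thesis by linarith
    qed
    have "(\<Sum>l\<in>UNIV. L$k$l * c$l) = L$k$k * c$k + (\<Sum>l\<in>UNIV - {k}. L$k$l * c$l)"
      by (simp add: sum.remove)
    moreover have "(\<Sum>l\<in>UNIV - {k}. L$k$l * c$l) \<ge> (\<Sum>l\<in>(UNIV::'n set) - {k}. - (C * M))"
      by (rule sum_mono) (use trm in auto)
    moreover have "(\<Sum>l\<in>(UNIV::'n set) - {k}. - (C * M)) \<ge> - (real CARD('n) * (C * M))"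
    proof -
      have "card ((UNIV::'n set) - {k}) \<le> CARD('n)" by (rule card_mono) auto
      then have "real (card ((UNIV::'n set) - {k})) * (C * M) \<le> real CARD('n) * (C * M)"
        using C0 M0 by (intro mult_right_mono) auto
      then show ?thesis by simp
    qed
    moreover have "L$k$k * c$k \<ge> real CARD('n) * (C * M)"
    proof -
      have nk: "\<not> k < j" "k \<noteq> j" using jk by auto
      have "R ^ rk k = R * R ^ (rk k - 1)" using rkpos by (cases "rk k") auto
      then have ck: "c$k = R * M" using nk by (simp add: c_def cvec_def M_def mult_ac)
      have "real CARD('n) * (C * M) = (C * real CARD('n)) * M" by (simp add: mult_ac)
      also have "\<dots> \<le> (c0 * R) * M" using R(2) M0 by (intro mult_right_mono) auto
      also have "\<dots> \<le> L$k$k * (R * M)" using c0 R M0 by (simp add: mult.assoc mult_right_mono)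
      finally show ?thesis using ck by simp
    qed
    ultimately have "(L *v c) $ k \<ge> 0" using sum_eq by linarith
    then show ?thesis by (simp add: c_def)
  qed
qed

lemma cvec_j: "cvec R j m $ j = - m" by (simp add: cvec_def)




theorem lemma6:
  fixes M :: "'w measure" and S :: "'s measure" and X :: "'w \<Rightarrow> 's"
    and \<Theta> :: "(real^('p::{finite,wellorder})) set" and \<theta>0 :: "real^('p::{finite,wellorder})"
    and Q :: "nat \<Rightarrow> 's \<Rightarrow> (real^('p::{finite,wellorder})) set \<Rightarrow> real"
    and \<theta>t :: "nat \<Rightarrow> 'w \<Rightarrow> real^('p::{finite,wellorder})"
    and \<Sigma>t :: "nat \<Rightarrow> 'w \<Rightarrow> real^('p::{finite,wellorder})^('p::{finite,wellorder})" and \<Sigma> :: "real^('p::{finite,wellorder})^('p::{finite,wellorder})" and \<Sigma>g :: "real^('p::{finite,wellorder})^('p::{finite,wellorder})"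
  assumes "prob_space M"
    and "X \<in> M \<rightarrow>\<^sub>M S"
    and "\<Theta> \<in> sets borel" and "\<theta>0 \<in> \<Theta>"
    and "\<exists>T0. \<forall>T\<ge>T0. (\<forall>B\<in>sets (restrict_space borel \<Theta>). (\<lambda>x. Q T x B) \<in> borel_measurable S)
                      \<and> (AE \<omega> in M. prob_on \<Theta> (Q T (X \<omega>)))"
    and "\<And>T. \<Sigma>t T \<in> vimage_algebra (space M) X S \<rightarrow>\<^sub>M borel"
    and "vanishing_in_prob M (\<lambda>T \<omega>. transpose (\<Sigma>t T \<omega>) \<noteq> \<Sigma>t T \<omega>)"
    and "conv_in_prob M \<Sigma>t \<Sigma>" and "pos_def \<Sigma>"
    and "pos_semidef \<Sigma>g"
    and "\<And>T. \<theta>t T \<in> vimage_algebra (space M) X S \<rightarrow>\<^sub>M restrict_space borel \<Theta>"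
    and "conv_in_prob M \<theta>t \<theta>0"
    and "\<And>b. conv_in_prob M
           (\<lambda>T \<omega>. cdf_of \<Theta> (Q T (X \<omega>)) (\<theta>t T \<omega> + (1 / sqrt (real T)) *\<^sub>R (chol (\<Sigma>t T \<omega>) *v b)))
           (gauss_cdf \<Sigma>g b)"
  shows "conv_in_prob M (\<lambda>T \<omega>. prokhorov \<Theta> (Q T (X \<omega>)) (\<lambda>A. indicator A \<theta>0)) 0"
  unfolding conv_in_prob_def
proof (intro allI impI)
  fix \<epsilon> :: real assume ep: "\<epsilon> > 0"
  define p where "p = real CARD('p)"
  have p1: "p \<ge> 1" unfolding p_def by (simp add: Suc_le_eq)
  define r where "r = \<epsilon> / p"
  have r0: "r > 0" using ep p1 by (simp add: r_def)
  have pr: "p * r \<le> \<epsilon>" using p1 by (simp add: r_def)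
  obtain c where c0: "c > 0" and marg: "\<forall>v. v \<bullet> (\<Sigma> *v v) \<ge> c * (norm v)^2"
    using posdef_margin[OF assms(9)] by blast
  define \<delta>0 where "\<delta>0 = min 1 ((c/2) / (p*p))"
  have d0: "\<delta>0 > 0" using c0 p1 by (simp add: \<delta>0_def)
  have d1: "\<delta>0 \<le> 1" by (simp add: \<delta>0_def)
  have dc: "p * p * \<delta>0 \<le> c/2"
  proof -
    have "\<delta>0 \<le> (c/2) / (p*p)" by (simp add: \<delta>0_def)
    then show ?thesis using p1 by (simp add: field_simps)
  qed
  define Cb where "Cb = sqrt (Max (range (\<lambda>i. \<bar>\<Sigma>$i$i\<bar>)) + 1)"
  define cc where "cc = sqrt (c/2)"
  have cc0: "cc > 0" using c0 by (simp add: cc_def)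
  define R where "R = max 1 (Cb * p / cc)"
  have R1: "R \<ge> 1" by (simp add: R_def)
  have R2: "cc * R \<ge> Cb * p"
  proof -
    have "Cb * p / cc \<le> R" by (simp add: R_def)
    then show ?thesis using cc0 by (simp add: field_simps)
  qed
  define \<eta> where "\<eta> = \<epsilon> / (4 * p)"
  have eta0: "\<eta> > 0" using ep p1 by (simp add: \<eta>_def)
  have peta: "p * \<eta> = \<epsilon> / 4" using p1 by (simp add: \<eta>_def)
  have "eventually (\<lambda>n. 1 - \<epsilon>/4 < gauss_cdf \<Sigma>g (\<chi> i. real n)) sequentially"
    by (rule order_tendstoD(1)[OF gauss_upper]) (use ep in simp)
  then obtain K :: nat where K: "1 - \<epsilon>/4 < gauss_cdf \<Sigma>g (\<chi> i. real K)"
    unfolding eventually_sequentially by blast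
  define u where "u = ((\<chi> i. real K) :: (real,'p) vec)"
  have "\<forall>j. \<exists>n::nat. \<forall>b. b$j \<le> - real n \<longrightarrow> gauss_cdf \<Sigma>g b < \<eta>"
  proof
    fix j :: 'p
    obtain f where f: "f \<longlonglongrightarrow> 0" "\<forall>n b. b$j \<le> - real n \<longrightarrow> gauss_cdf \<Sigma>g b \<le> f n"
      using gauss_lower[of j \<Sigma>g] by blast
    have "eventually (\<lambda>n. f n < \<eta>) sequentially" by (rule order_tendstoD(2)[OF f(1) eta0])
    then obtain n where "f n < \<eta>" unfolding eventually_sequentially by blast
    then show "\<exists>n::nat. \<forall>b. b$j \<le> - real n \<longrightarrow> gauss_cdf \<Sigma>g b < \<eta>"
      using f(2) by (meson le_less_trans)
  qed
  then obtain nn :: "'p \<Rightarrow> nat" where nn: "\<forall>j b. b$j \<le> - real (nn j) \<longrightarrow> gauss_cdf \<Sigma>g b < \<eta>"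
    by metis
  define bb where "bb j = u + cvec R j (real K + real (nn j))" for j
  have Nb: "gauss_cdf \<Sigma>g (bb j) < \<eta>" for j
  proof -
    have "bb j $ j = - real (nn j)" by (simp add: bb_def u_def cvec_j)
    then have "bb j $ j \<le> - real (nn j)" by simp
    then show ?thesis using nn by blast
  qed
  have Nu: "1 - \<epsilon>/4 < gauss_cdf \<Sigma>g u" using K by (simp add: u_def)
  define nb where "nb = norm u + (\<Sum>j\<in>UNIV. norm (bb j))"
  have nbu: "norm u \<le> nb" by (simp add: nb_def sum_nonneg)
  have nbb: "norm (bb j) \<le> nb" for j
  proof -
    have "norm (bb j) \<le> (\<Sum>j\<in>UNIV. norm (bb j))" by (rule member_le_sum) auto
    then show ?thesis using norm_ge_zero[of u] unfolding nb_def by linarith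
  qed
  define Kc where "Kc = p * p * Cb * nb"
  have Smax: "\<bar>\<Sigma>$i$i\<bar> \<le> Max (range (\<lambda>i. \<bar>\<Sigma>$i$i\<bar>))" for i by (rule Max_ge) auto
  have Mx0: "0 \<le> Max (range (\<lambda>i. \<bar>\<Sigma>$i$i\<bar>))" using Smax[of undefined] abs_ge_zero[of "\<Sigma>$undefined$undefined"] by linarith
  have Cb0: "Cb \<ge> 0" using Mx0 by (simp add: Cb_def)
  have nb0: "nb \<ge> 0" using nbu norm_ge_zero[of u] by linarith
  have Kc0: "Kc \<ge> 0" using p1 Cb0 nb0 unfolding Kc_def by (intro mult_nonneg_nonneg) auto
  obtain N :: nat where N: "(4 * Kc / r)^2 < real N" using reals_Archimedean2 by blast
  have small: "(1 / sqrt (real T)) * Kc < r/4" if T: "T \<ge> max 1 N" for T :: nat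
  proof -
    have "(4 * Kc / r)^2 < real T" using N T by linarith
    then have "sqrt ((4 * Kc / r)^2) < sqrt (real T)" by (rule real_sqrt_less_mono)
    moreover have "sqrt ((4 * Kc / r)^2) = 4 * Kc / r" using Kc0 r0 by simp
    ultimately have a: "4 * Kc / r < sqrt (real T)" by simp
    have sT: "sqrt (real T) > 0" using T by simp
    have "Kc < (r/4) * sqrt (real T)" using a r0 by (simp add: field_simps)
    then show ?thesis using sT by (simp add: field_simps)
  qed
  define Pt where "Pt b T \<omega> = \<theta>t T \<omega> + (1 / sqrt (real T)) *\<^sub>R (chol (\<Sigma>t T \<omega>) *v b)" for b T \<omega>
  define F where "F b T \<omega> = cdf_of \<Theta> (Q T (X \<omega>)) (Pt b T \<omega>)" for b T \<omega>
  define E1 where "E1 T \<omega> = (transpose (\<Sigma>t T \<omega>) \<noteq> \<Sigma>t T \<omega>)" for T \<omega>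
  define E2 where "E2 T \<omega> = (dist (\<Sigma>t T \<omega>) \<Sigma> > \<delta>0)" for T \<omega>
  define E3 where "E3 T \<omega> = (dist (\<theta>t T \<omega>) \<theta>0 > r/4)" for T \<omega>
  define E4 where "E4 T \<omega> = (dist (F u T \<omega>) (gauss_cdf \<Sigma>g u) > \<epsilon>/4)" for T \<omega>
  define E5 where "E5 j T \<omega> = (dist (F (bb j) T \<omega>) (gauss_cdf \<Sigma>g (bb j)) > \<eta>)" for j T \<omega>
  define E6 where "E6 T \<omega> = (\<not> prob_on \<Theta> (Q T (X \<omega>)))" for T \<omega>
  have v1: "vanishing_in_prob M E1" using assms(7) by (simp add: E1_def[abs_def])
  have v2: "vanishing_in_prob M E2" unfolding E2_def[abs_def] by (rule conv_van[OF assms(8) d0])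
  have v3: "vanishing_in_prob M E3" unfolding E3_def[abs_def] by (rule conv_van[OF assms(12)]) (use r0 in simp)
  have v4: "vanishing_in_prob M E4" unfolding E4_def[abs_def] F_def Pt_def
    by (rule conv_van[OF assms(13)]) (use ep in simp)
  have v5: "vanishing_in_prob M (E5 j)" for j unfolding E5_def[abs_def] F_def Pt_def
    by (rule conv_van[OF assms(13) eta0])
  have v6: "vanishing_in_prob M E6"
  proof (rule van_AE)
    obtain T0 where T0: "\<forall>T\<ge>T0. AE \<omega> in M. prob_on \<Theta> (Q T (X \<omega>))" using assms(5) by blast
    show "eventually (\<lambda>T. AE \<omega> in M. \<not> E6 T \<omega>) sequentially"
      unfolding eventually_sequentially E6_def using T0 by auto
  qed
  have vall: "vanishing_in_prob M (\<lambda>T \<omega>. E1 T \<omega> \<or> E2 T \<omega> \<or> E3 T \<omega> \<or> E4 T \<omega> \<or> (\<exists>j\<in>UNIV. E5 j T \<omega>) \<or> E6 T \<omega>)"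
    by (intro van_union v1 v2 v3 v4 v6 van_finite v5) auto
  have key: "dist (prokhorov \<Theta> (Q T (X \<omega>)) (\<lambda>A. indicator A \<theta>0)) 0 \<le> \<epsilon>"
    if T: "T \<ge> max 1 N" and n1: "\<not> E1 T \<omega>" and n2: "\<not> E2 T \<omega>" and n3: "\<not> E3 T \<omega>"
      and n4: "\<not> E4 T \<omega>" and n5: "\<forall>j. \<not> E5 j T \<omega>" and n6: "\<not> E6 T \<omega>" for T \<omega>
  proof -
    define St where "St = \<Sigma>t T \<omega>"
    define L where "L = chol St"
    define q where "q = Q T (X \<omega>)"
    have sym: "transpose St = St" using n1 by (simp add: E1_def St_def)
    have nd: "norm (St - \<Sigma>) \<le> \<delta>0" using n2 by (simp add: E2_def St_def dist_norm)
    have marg2: "\<forall>v. v \<bullet> (St *v v) \<ge> (c/2) * (norm v)^2"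
      by (rule perturb[OF marg nd]) (use dc in \<open>simp add: p_def\<close>)
    have cp: "lower_triangular L \<and> L ** transpose L = St \<and> (\<forall>i. L$i$i \<ge> sqrt (c/2))"
      unfolding L_def by (rule chol_props[OF sym _ marg2]) (use c0 in simp)
    then have LT: "lower_triangular L" and LL: "L ** transpose L = St" and LD: "\<forall>i. L$i$i \<ge> cc"
      by (auto simp: cc_def)
    have LC: "\<bar>L$i$k\<bar> \<le> Cb" for i k
    proof -
      have "\<bar>St$i$i\<bar> \<le> \<bar>\<Sigma>$i$i\<bar> + \<bar>(St - \<Sigma>)$i$i\<bar>" by simp
      also have "\<bar>(St - \<Sigma>)$i$i\<bar> \<le> \<delta>0" using matrix_entry_le_norm[of "St - \<Sigma>" i i] nd by simp
      finally have "\<bar>St$i$i\<bar> \<le> Max (range (\<lambda>i. \<bar>\<Sigma>$i$i\<bar>)) + 1" using Smax[of i] d1 by linarith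
      then have "sqrt \<bar>St$i$i\<bar> \<le> Cb" unfolding Cb_def by (rule real_sqrt_le_mono)
      then show ?thesis using chol_entry_bound[OF LL, of i k] by linarith
    qed
    have on: "onorm ((*v) L) \<le> p * p * Cb" unfolding p_def by (rule onorm_le_matrix_component) (rule LC)
    have dsmall: "norm ((1 / sqrt (real T)) *\<^sub>R (L *v b)) < r/4" if "norm b \<le> nb" for b
    proof -
      have "norm (L *v b) \<le> onorm ((*v) L) * norm b" by (rule onorm) simp
      also have "\<dots> \<le> (p * p * Cb) * nb" using on that Cb0 p1 by (intro mult_mono) auto
      finally have "norm (L *v b) \<le> Kc" by (simp add: Kc_def)
      then have "(1 / sqrt (real T)) * norm (L *v b) \<le> (1 / sqrt (real T)) * Kc"
        by (intro mult_left_mono) auto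
      moreover have "norm ((1 / sqrt (real T)) *\<^sub>R (L *v b)) = (1 / sqrt (real T)) * norm (L *v b)" by simp
      ultimately show ?thesis using small[OF T] by linarith
    qed
    have coord: "\<bar>x$i\<bar> < r/4" if "norm x < r/4" for x :: "(real,'p) vec" and i
      using component_le_norm_cart[of x i] that by linarith
    have th: "\<bar>\<theta>t T \<omega> $ i - \<theta>0 $ i\<bar> \<le> r/4" for i
    proof -
      have "\<bar>(\<theta>t T \<omega> - \<theta>0) $ i\<bar> \<le> norm (\<theta>t T \<omega> - \<theta>0)" by (rule component_le_norm_cart)
      then show ?thesis using n3 by (simp add: E3_def dist_norm)
    qed
    define Pu where "Pu = Pt u T \<omega>"
    define Pb where "Pb j = Pt (bb j) T \<omega>" for j
    have du: "\<bar>((1 / sqrt (real T)) *\<^sub>R (L *v u)) $ i\<bar> < r/4" for i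
      by (rule coord[OF dsmall[OF nbu]])
    have db: "\<bar>((1 / sqrt (real T)) *\<^sub>R (L *v bb j)) $ i\<bar> < r/4" for i j
      by (rule coord[OF dsmall[OF nbb]])
    have up: "\<forall>i. Pu$i < \<theta>0$i + r"
    proof
      fix i
      have e: "Pu$i = \<theta>t T \<omega> $ i + ((1 / sqrt (real T)) *\<^sub>R (L *v u)) $ i"
        by (simp add: Pu_def Pt_def L_def St_def)
      show "Pu$i < \<theta>0$i + r" using th[of i] du[of i] r0 e unfolding abs_le_iff abs_less_iff by linarith
    qed
    have lo: "\<forall>j. \<theta>0$j - r < Pb j $ j"
    proof
      fix j
      have e: "Pb j $ j = \<theta>t T \<omega> $ j + ((1 / sqrt (real T)) *\<^sub>R (L *v bb j)) $ j"
        by (simp add: Pb_def Pt_def L_def St_def)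
      show "\<theta>0$j - r < Pb j $ j" using th[of j] db[of j j] r0 e unfolding abs_le_iff abs_less_iff by linarith
    qed
    have ord: "\<forall>j k. k \<noteq> j \<longrightarrow> Pu$k \<le> Pb j $ k"
    proof (intro allI impI)
      fix j k :: 'p assume kj: "k \<noteq> j"
      have "(L *v cvec R j (real K + real (nn j))) $ k \<ge> 0"
        by (rule cvec_nonneg[OF LT _ cc0 LD _ R1 _ kj]) (use LC R2 in \<open>auto simp: p_def\<close>)
      moreover have "Pb j - Pu = (1 / sqrt (real T)) *\<^sub>R (L *v cvec R j (real K + real (nn j)))"
        by (simp add: Pb_def Pu_def Pt_def L_def St_def bb_def matrix_vector_right_distrib scaleR_add_right)
      ultimately have "(Pb j - Pu) $ k \<ge> 0" by simp
      then show "Pu$k \<le> Pb j $ k" by simp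
    qed
    have po: "prob_on \<Theta> q" using n6 by (simp add: E6_def q_def)
    have bad: "q {y\<in>\<Theta>. \<epsilon> \<le> dist y \<theta>0} \<le> (1 - cdf_of \<Theta> q Pu) + (\<Sum>j\<in>UNIV. cdf_of \<Theta> q (Pb j))"
      by (rule bad_bound[OF po assms(3) r0 _ up lo ord]) (use pr in \<open>simp add: p_def\<close>)
    have Fu: "cdf_of \<Theta> q Pu \<ge> gauss_cdf \<Sigma>g u - \<epsilon>/4"
    proof -
      have "\<bar>cdf_of \<Theta> q Pu - gauss_cdf \<Sigma>g u\<bar> \<le> \<epsilon>/4"
        using n4 unfolding E4_def F_def q_def Pu_def dist_real_def by linarith
      then show ?thesis unfolding abs_le_iff by linarith
    qed
    have Fb: "cdf_of \<Theta> q (Pb j) \<le> gauss_cdf \<Sigma>g (bb j) + \<eta>" for j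
    proof -
      have "\<bar>cdf_of \<Theta> q (Pb j) - gauss_cdf \<Sigma>g (bb j)\<bar> \<le> \<eta>"
        using n5 unfolding E5_def F_def q_def Pb_def dist_real_def by (meson not_less)
      then show ?thesis unfolding abs_le_iff by linarith
    qed
    have "(\<Sum>j\<in>UNIV. cdf_of \<Theta> q (Pb j)) \<le> (\<Sum>j\<in>(UNIV::'p set). 2 * \<eta>)"
    proof (rule sum_mono)
      fix j show "cdf_of \<Theta> q (Pb j) \<le> 2 * \<eta>" using Fb[of j] Nb[of j] by linarith
    qed
    also have "\<dots> = \<epsilon> / 2" using peta by (simp add: p_def)
    finally have "q {y\<in>\<Theta>. \<epsilon> \<le> dist y \<theta>0} \<le> \<epsilon>" using bad Fu Nu by linarith
    then have "0 \<le> prokhorov \<Theta> q (\<lambda>A. indicator A \<theta>0) \<and> prokhorov \<Theta> q (\<lambda>A. indicator A \<theta>0) \<le> \<epsilon>"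
      by (rule prok_bound[OF po assms(4,3) ep])
    then show ?thesis by (simp add: q_def dist_real_def)
  qed
  show "vanishing_in_prob M (\<lambda>T \<omega>. \<epsilon> < dist (prokhorov \<Theta> (Q T (X \<omega>)) (\<lambda>A. indicator A \<theta>0)) 0)"
  proof (rule van_mono[OF vall])
    show "eventually (\<lambda>T. \<forall>\<omega>\<in>space M. \<epsilon> < dist (prokhorov \<Theta> (Q T (X \<omega>)) (\<lambda>A. indicator A \<theta>0)) 0 \<longrightarrow>
        E1 T \<omega> \<or> E2 T \<omega> \<or> E3 T \<omega> \<or> E4 T \<omega> \<or> (\<exists>j\<in>UNIV. E5 j T \<omega>) \<or> E6 T \<omega>) sequentially"
      unfolding eventually_sequentially
    proof (intro exI allI impI ballI)
      fix T \<omega> assume T: "max 1 N \<le> T"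
        and gt: "\<epsilon> < dist (prokhorov \<Theta> (Q T (X \<omega>)) (\<lambda>A. indicator A \<theta>0)) 0"
      show "E1 T \<omega> \<or> E2 T \<omega> \<or> E3 T \<omega> \<or> E4 T \<omega> \<or> (\<exists>j\<in>UNIV. E5 j T \<omega>) \<or> E6 T \<omega>"
        using key[OF T] gt by force
    qed
  qed
qed


end
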